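(* Fix $\alpha\in(0,1)$ and $p,q\in[0,1]$ with $q=\alpha p$. Then the set function $\mathcal{M}\mapsto R(p,q,\mathcal{M})$, defined on subsets $\mathcal{M}\subseteq\widetilde{S}(q)$, is monotonically non-decreasing and submodular.
   Context: Let $\mathcal{G}=(\mathcal{U},\mathcal{E})$ be a finite directed graph without self-loops, $\mathcal{U}=\{1,\dots,U\}$. For $u,v\in\mathcal{U}$, $D(u,v;\mathcal{G})$ denotes the number of edges of a shortest directed path from $u$ to $v$ in $\mathcal{G}$, with $D(u,v;\mathcal{G})=+\infty$ if there is no such path. For an integer $d\ge0$, the $d$-visible set of $u$ is $\mathcal{V}(u,d;\mathcal{G})=\{v\in\mathcal{U}: D(v,u;\mathcal{G})\le d\}$. Fix an integer social visibility threshold $\tau\ge1$. Let $\mathcal{R}\subseteq\mathcal{U}$ (requesters) and $\mathcal{S}\subseteq\mathcal{U}$ (suppliers) be disjoint. Each requester $u\in\mathcal{R}$ has a valuation $p_u\in[0,1]$ and each supplier $u\in\mathcal{S}$ has a valuation $q_u\in[0,1]$. For $p\in[0,1]$ let $\widetilde{R}(p)=\{u\in\mathcal{R}: p_u\ge p\}$ and for $q\in[0,1]$ let $\widetilde{S}(q)=\{u\in\mathcal{S}: q_u\le q\}$. For $\mathcal{M}\subseteq\mathcal{S}$ let $\widetilde{G}(p,\mathcal{M})$ be the graph obtained from $\mathcal{G}$ by adding a directed edge from every $s\in\mathcal{M}$ to every $r\in\widetilde{R}(p)$. For $u\in\widetilde{R}(p)$ let $I_u(p,\mathcal{M})=|\mathcal{V}(u,\tau;\widetilde{G}(p,\mathcal{M}))\setminus\mathcal{V}(u,\tau;\mathcal{G})|$,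 and $I(p,\mathcal{M})=\sum_{u\in\widetilde{R}(p)}I_u(p,\mathcal{M})$. The revenue is $R(p,q,\mathcal{M})=p\,I(p,\mathcal{M})-q\,I(p,\mathcal{M})$; when $q=\alpha p$ this equals $(1-\alpha)p\,I(p,\mathcal{M})$. *)

theory Defs
  imports Main "HOL-Library.Extended_Nat"
begin

text \<open>Directed graph on vertex set Uset with edge relation E (pairs (a,b) = edge a -> b).
  D(u,v;G): length of a shortest directed path from u to v, infinity if none.\<close>
definition sdist :: "(nat \<times> nat) set \<Rightarrow> nat \<Rightarrow> nat \<Rightarrow> enat" where
  "sdist E u v = (INF k \<in> {k. (u, v) \<in> E ^^ k}. enat k)"

definition visible :: "nat set \<Rightarrow> (nat \<times> nat) set \<Rightarrow> nat \<Rightarrow> nat \<Rightarrow> nat set" where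
  "visible Uset E u d = {v \<in> Uset. sdist E v u \<le> enat d}"

definition Rtil :: "nat set \<Rightarrow> (nat \<Rightarrow> real) \<Rightarrow> real \<Rightarrow> nat set" where
  "Rtil Rq pv p = {u \<in> Rq. pv u \<ge> p}"

definition Stil :: "nat set \<Rightarrow> (nat \<Rightarrow> real) \<Rightarrow> real \<Rightarrow> nat set" where
  "Stil Sq qv q = {u \<in> Sq. qv u \<le> q}"

definition Gtil :: "(nat \<times> nat) set \<Rightarrow> nat set \<Rightarrow> (nat \<Rightarrow> real) \<Rightarrow> real \<Rightarrow> nat set \<Rightarrow> (nat \<times> nat) set" where
  "Gtil E Rq pv p M = E \<union> (M \<times> Rtil Rq pv p)"

definition Iu :: "nat set \<Rightarrow> (nat \<times> nat) set \<Rightarrow> nat \<Rightarrow> nat set \<Rightarrow> (nat \<Rightarrow> real) \<Rightarrow> real \<Rightarrow> nat set \<Rightarrow> nat \<Rightarrow> nat" where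
  "Iu Uset E tau Rq pv p M u =
     card (visible Uset (Gtil E Rq pv p M) u tau - visible Uset E u tau)"

definition Itot :: "nat set \<Rightarrow> (nat \<times> nat) set \<Rightarrow> nat \<Rightarrow> nat set \<Rightarrow> (nat \<Rightarrow> real) \<Rightarrow> real \<Rightarrow> nat set \<Rightarrow> nat" where
  "Itot Uset E tau Rq pv p M = (\<Sum>u \<in> Rtil Rq pv p. Iu Uset E tau Rq pv p M u)"

definition revenue :: "nat set \<Rightarrow> (nat \<times> nat) set \<Rightarrow> nat \<Rightarrow> nat set \<Rightarrow> (nat \<Rightarrow> real) \<Rightarrow> real \<Rightarrow> real \<Rightarrow> nat set \<Rightarrow> real" where
  "revenue Uset E tau Rq pv p q M =
     p * real (Itot Uset E tau Rq pv p M) - q * real (Itot Uset E tau Rq pv p M)"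

definition monotone_setfun_on :: "'a set \<Rightarrow> ('a set \<Rightarrow> real) \<Rightarrow> bool" where
  "monotone_setfun_on X f \<longleftrightarrow> (\<forall>A B. A \<subseteq> B \<and> B \<subseteq> X \<longrightarrow> f A \<le> f B)"

definition submodular_on :: "'a set \<Rightarrow> ('a set \<Rightarrow> real) \<Rightarrow> bool" where
  "submodular_on X f \<longleftrightarrow>
     (\<forall>A B. A \<subseteq> X \<and> B \<subseteq> X \<longrightarrow> f (A \<union> B) + f (A \<inter> B) \<le> f A + f B)"

end

theory Submission
  imports Defs
begin

lemma sdist_le_iff: "sdist E v u \<le> enat d \<longleftrightarrow> (\<exists>k\<le>d. (v,u) \<in> E ^^ k)"
proof
  assume h: "sdist E v u \<le> enat d"
  show "\<exists>k\<le>d. (v,u) \<in> E ^^ k"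
  proof (cases "{k. (v, u) \<in> E ^^ k} = {}")
    case True then show ?thesis using h by (simp add: sdist_def top_enat_def)
  next
    case False
    then obtain k0 where k0: "(v,u) \<in> E ^^ k0" by auto
    let ?m = "LEAST k. (v,u) \<in> E ^^ k"
    have m: "(v,u) \<in> E ^^ ?m" using k0 by (rule LeastI)
    have "sdist E v u = enat ?m"
      unfolding sdist_def
      by (rule antisym, rule INF_lower, use m in simp,
          rule INF_greatest, auto intro: Least_le)
    with h m show ?thesis by auto
  qed
next
  assume "\<exists>k\<le>d. (v,u) \<in> E ^^ k"
  then obtain k where "k \<le> d" "(v,u) \<in> E ^^ k" by auto
  then have "sdist E v u \<le> enat k" unfolding sdist_def by (intro INF_lower) auto
  with \<open>k \<le> d\<close> show "sdist E v u \<le> enat d" by (meson enat_ord_simps(1) order_trans)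
qed

lemma path_split:
  "(v,w) \<in> (E \<union> M \<times> R) ^^ k \<Longrightarrow> (v,w) \<in> E ^^ k \<or> (\<exists>s\<in>M. \<exists>j<k. (v,s) \<in> E ^^ j)"
proof (induction k arbitrary: w)
  case 0 then show ?case by simp
next
  case (Suc k)
  then obtain x where x: "(v,x) \<in> (E \<union> M \<times> R) ^^ k" "(x,w) \<in> E \<union> M \<times> R" by auto
  from Suc.IH[OF x(1)] show ?case
  proof
    assume a: "(v,x) \<in> E ^^ k"
    show ?thesis
    proof (cases "(x,w) \<in> E")
      case True then show ?thesis using a by auto
    next
      case False then have "x \<in> M" using x(2) by auto
      then show ?thesis using a by auto
    qed
  next
    assume "\<exists>s\<in>M. \<exists>j<k. (v,s) \<in> E ^^ j"
    then show ?thesis using less_SucI by blast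
  qed
qed

lemma relpow_mono_un: "(v::'a,w::'a) \<in> E ^^ k \<Longrightarrow> (v,w) \<in> (E \<union> F) ^^ k"
  by (induction k arbitrary: w) auto

lemma reach_iff:
  assumes "u \<in> R"
  shows "(\<exists>k\<le>d. (v,u) \<in> (E \<union> M \<times> R) ^^ k) \<longleftrightarrow>
         (\<exists>k\<le>d. (v,u) \<in> E ^^ k) \<or> (\<exists>s\<in>M. \<exists>j. j + 1 \<le> d \<and> (v,s) \<in> E ^^ j)"
proof
  assume "\<exists>k\<le>d. (v,u) \<in> (E \<union> M \<times> R) ^^ k"
  then obtain k where "k \<le> d" "(v,u) \<in> (E \<union> M \<times> R) ^^ k" by auto
  note kd = this
  from path_split[OF kd(2)] show "(\<exists>k\<le>d. (v,u) \<in> E ^^ k) \<or> (\<exists>s\<in>M. \<exists>j. j + 1 \<le> d \<and> (v,s) \<in> E ^^ j)"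
  proof
    assume "(v,u) \<in> E ^^ k" then show ?thesis using kd(1) by blast
  next
    assume "\<exists>s\<in>M. \<exists>j<k. (v,s) \<in> E ^^ j"
    then obtain s j where "s \<in> M" "j < k" "(v,s) \<in> E ^^ j" by blast
    then have "j + 1 \<le> d" using kd(1) by linarith
    then show ?thesis using \<open>s \<in> M\<close> \<open>(v,s) \<in> E ^^ j\<close> by blast
  qed
next
  assume "(\<exists>k\<le>d. (v,u) \<in> E ^^ k) \<or> (\<exists>s\<in>M. \<exists>j. j + 1 \<le> d \<and> (v,s) \<in> E ^^ j)"
  then show "\<exists>k\<le>d. (v,u) \<in> (E \<union> M \<times> R) ^^ k"
  proof
    assume "\<exists>k\<le>d. (v,u) \<in> E ^^ k"
    then obtain k where "k \<le> d" "(v,u) \<in> E ^^ k" by blast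
    then show ?thesis using relpow_mono_un[where F="M \<times> R"] by blast
  next
    assume "\<exists>s\<in>M. \<exists>j. j + 1 \<le> d \<and> (v,s) \<in> E ^^ j"
    then obtain s j where sj: "s \<in> M" "j + 1 \<le> d" "(v,s) \<in> E ^^ j" by auto
    have "(v,s) \<in> (E \<union> M \<times> R) ^^ j" by (rule relpow_mono_un[OF sj(3)])
    moreover have "(s,u) \<in> E \<union> M \<times> R" using sj(1) assms by auto
    ultimately have "(v,u) \<in> (E \<union> M \<times> R) ^^ Suc j" by (rule relpow_Suc_I)
    moreover have "Suc j \<le> d" using sj(2) by simp
    ultimately show ?thesis by blast
  qed
qed

definition CC :: "nat set \<Rightarrow> (nat \<times> nat) set \<Rightarrow> nat \<Rightarrow> nat \<Rightarrow> nat \<Rightarrow> nat set" where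
  "CC Uset E d u s = {v \<in> Uset. \<exists>j. j + 1 \<le> d \<and> (v,s) \<in> E ^^ j} - visible Uset E u d"

lemma Iu_eq:
  assumes "u \<in> Rtil Rq pv p"
  shows "Iu Uset E tau Rq pv p M u = card (\<Union>s\<in>M. CC Uset E tau u s)"
proof -
  have "visible Uset (Gtil E Rq pv p M) u tau - visible Uset E u tau = (\<Union>s\<in>M. CC Uset E tau u s)"
    unfolding visible_def CC_def Gtil_def sdist_le_iff
    using reach_iff[OF assms, of tau _ E M] by auto
  then show ?thesis unfolding Iu_def by simp
qed

lemma cover_submod:
  fixes C :: "'b \<Rightarrow> 'a set"
  assumes "finite X" "\<And>s. C s \<subseteq> X"
  shows "card (\<Union>s\<in>A\<union>B. C s) + card (\<Union>s\<in>A\<inter>B. C s) \<le> card (\<Union>s\<in>A. C s) + card (\<Union>s\<in>B. C s)"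
proof -
  have fA: "finite (\<Union>s\<in>A. C s)" "finite (\<Union>s\<in>B. C s)"
    using assms by (auto intro: finite_subset)
  have "card (\<Union>s\<in>A\<inter>B. C s) \<le> card ((\<Union>s\<in>A. C s) \<inter> (\<Union>s\<in>B. C s))"
    using fA by (intro card_mono) auto
  moreover have eq: "(\<Union>s\<in>A\<union>B. C s) = (\<Union>s\<in>A. C s) \<union> (\<Union>s\<in>B. C s)" by auto
  moreover have "card ((\<Union>s\<in>A. C s) \<union> (\<Union>s\<in>B. C s)) + card ((\<Union>s\<in>A. C s) \<inter> (\<Union>s\<in>B. C s))
      = card (\<Union>s\<in>A. C s) + card (\<Union>s\<in>B. C s)"
    using fA by (rule card_Un_Int[symmetric])
  ultimately show ?thesis unfolding eq by linarith
qed

theorem theorem2: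
  fixes U tau :: nat and E :: "(nat \<times> nat) set" and Rq Sq :: "nat set"
    and pv qv :: "nat \<Rightarrow> real" and \<alpha> p q :: real
  assumes "E \<subseteq> {1..U} \<times> {1..U}"
    and "\<forall>u. (u, u) \<notin> E"
    and "tau \<ge> 1"
    and "Rq \<subseteq> {1..U}" and "Sq \<subseteq> {1..U}" and "Rq \<inter> Sq = {}"
    and "\<forall>u \<in> Rq. 0 \<le> pv u \<and> pv u \<le> 1"
    and "\<forall>u \<in> Sq. 0 \<le> qv u \<and> qv u \<le> 1"
    and "0 < \<alpha>" and "\<alpha> < 1"
    and "0 \<le> p" and "p \<le> 1" and "0 \<le> q" and "q \<le> 1"
    and "q = \<alpha> * p"
  shows "monotone_setfun_on (Stil Sq qv q) (revenue {1..U} E tau Rq pv p q)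
       \<and> submodular_on (Stil Sq qv q) (revenue {1..U} E tau Rq pv p q)"
proof -
  let ?R = "Rtil Rq pv p"
  let ?C = "CC {1..U} E tau"
  define f where "f M = (\<Sum>u\<in>?R. card (\<Union>s\<in>M. ?C u s))" for M
  have pq: "p - q \<ge> 0" using assms by (simp add: mult_le_cancel_right1 mult_left_le_one_le)
  have rev: "revenue {1..U} E tau Rq pv p q M = (p - q) * real (f M)" for M
  proof -
    have "Itot {1..U} E tau Rq pv p M = f M"
      unfolding Itot_def f_def by (rule sum.cong) (auto simp: Iu_eq)
    then show ?thesis unfolding revenue_def by (simp add: left_diff_distrib)
  qed
  have sub: "?C u s \<subseteq> {1..U}" for u s unfolding CC_def by auto
  have fin: "finite (\<Union>s\<in>B. ?C u s)" for u B
    by (rule finite_subset[of _ "{1..U}"]) (use sub in auto)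
  have mono: "f A \<le> f B" if "A \<subseteq> B" for A B
    unfolding f_def
    by (intro sum_mono card_mono fin) (use that in auto)
  have sm: "f (A \<union> B) + f (A \<inter> B) \<le> f A + f B" for A B
    unfolding f_def sum.distrib[symmetric]
    by (intro sum_mono cover_submod[of "{1..U}", OF _ sub]) auto
  show ?thesis
    unfolding monotone_setfun_on_def submodular_on_def rev
  proof (intro conjI allI impI)
    fix A B :: "nat set" assume "A \<subseteq> B \<and> B \<subseteq> Stil Sq qv q"
    then show "(p - q) * real (f A) \<le> (p - q) * real (f B)"
      using mono pq by (intro mult_left_mono) auto
  next
    fix A B :: "nat set"
    have "real (f (A \<union> B)) + real (f (A \<inter> B)) \<le> real (f A) + real (f B)"
      using sm[of A B] by linarith
    then have "(p - q) * (real (f (A \<union> B)) + real (f (A \<inter> B))) \<le> (p - q) * (real (f A) + real (f B))"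
      using pq by (rule mult_left_mono)
    then show "(p - q) * real (f (A \<union> B)) + (p - q) * real (f (A \<inter> B)) \<le> (p - q) * real (f A) + (p - q) * real (f B)"
      by (simp add: distrib_left)
  qed
qed

end
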